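(* Let $X$ be an infinite dimensional real Banach space. Then there is a closed convex set $K$ contained in the open unit ball $\{x\in X:\|x\|<1\}$ of $X$ such that $\sup\{\|x\|: x\in K\}=1$. *)

theory Defs
  imports "HOL-Analysis.Analysis"
begin

end

theory Submission
  imports Defs
begin


definition goodg :: "'a::real_normed_vector \<Rightarrow> ('a \<times> real) set \<Rightarrow> bool" where
 "goodg x0 g \<longleftrightarrow> (\<forall>x y y'. (x,y)\<in>g \<longrightarrow> (x,y')\<in>g \<longrightarrow> y = y') \<and>
   (\<forall>x y x' y'. (x,y)\<in>g \<longrightarrow> (x',y')\<in>g \<longrightarrow> (x+x', y+y')\<in>g) \<and>
   (\<forall>x y c. (x,y)\<in>g \<longrightarrow> (c *\<^sub>R x, c*y) \<in> g) \<and>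
   (\<forall>x y. (x,y)\<in>g \<longrightarrow> y \<le> norm x) \<and> (x0, norm x0) \<in> g"

lemma goodg_g0: "goodg x0 {(c *\<^sub>R x0, c * norm x0) | c. True}"
proof -
  have fn1: "c' * norm x0 = c * norm x0" if "c *\<^sub>R x0 = c' *\<^sub>R x0" for c c'
  proof (cases "x0 = 0")
    case False
    then have "c = c'" using that by (metis scaleR_cancel_right)
    then show ?thesis by simp
  qed simp
  have bd: "c * norm x0 \<le> norm (c *\<^sub>R x0)" for c
    by (simp add: abs_ge_self mult_right_mono)
  show ?thesis unfolding goodg_def
  proof (intro conjI allI impI)
    fix x y y' assume "(x,y) \<in> {(c *\<^sub>R x0, c * norm x0) | c. True}"
      "(x,y') \<in> {(c *\<^sub>R x0, c * norm x0) | c. True}"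
    then obtain a b where "x = a *\<^sub>R x0" "y = a * norm x0" "x = b *\<^sub>R x0" "y' = b * norm x0" by blast
    then have "a *\<^sub>R x0 = b *\<^sub>R x0" by metis
    from fn1[OF this] show "y = y'" using \<open>y = a * norm x0\<close> \<open>y' = b * norm x0\<close> by auto
  next
    fix x y x' y' assume "(x,y) \<in> {(c *\<^sub>R x0, c * norm x0) | c. True}"
      "(x',y') \<in> {(c *\<^sub>R x0, c * norm x0) | c. True}"
    then obtain a b where "x = a *\<^sub>R x0" "y = a * norm x0" "x' = b *\<^sub>R x0" "y' = b * norm x0" by blast
    then have "x + x' = (a+b) *\<^sub>R x0" "y + y' = (a+b) * norm x0" by (simp_all add: algebra_simps)
    then show "(x + x', y + y') \<in> {(c *\<^sub>R x0, c * norm x0) | c. True}" by blast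
  next
    fix x y r assume "(x,y) \<in> {(c *\<^sub>R x0, c * norm x0) | c. True}"
    then obtain a where "x = a *\<^sub>R x0" "y = a * norm x0" by blast
    then have "r *\<^sub>R x = (r*a) *\<^sub>R x0" "r * y = (r*a) * norm x0" by simp_all
    then show "(r *\<^sub>R x, r * y) \<in> {(c *\<^sub>R x0, c * norm x0) | c. True}" by blast
  next
    fix x y assume "(x,y) \<in> {(c *\<^sub>R x0, c * norm x0) | c. True}"
    then obtain a where "x = a *\<^sub>R x0" "y = a * norm x0" by blast
    then show "y \<le> norm x" using bd[of a] by simp
  next
    have "x0 = 1 *\<^sub>R x0 \<and> norm x0 = 1 * norm x0" by simp
    then show "(x0, norm x0) \<in> {(c *\<^sub>R x0, c * norm x0) | c. True}" by blast
  qed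
qed

lemma goodgD:
  assumes "goodg x0 g"
  shows "\<And>x y y'. (x,y)\<in>g \<Longrightarrow> (x,y')\<in>g \<Longrightarrow> y = y'"
   and "\<And>x y x' y'. (x,y)\<in>g \<Longrightarrow> (x',y')\<in>g \<Longrightarrow> (x+x', y+y')\<in>g"
   and "\<And>x y c. (x,y)\<in>g \<Longrightarrow> (c *\<^sub>R x, c*y) \<in> g"
   and "\<And>x y. (x,y)\<in>g \<Longrightarrow> y \<le> norm x"
   and "(x0, norm x0) \<in> g"
  using assms unfolding goodg_def by blast+

lemma goodg_union:
  assumes "C \<noteq> {}" "\<forall>g\<in>C. goodg x0 g" "\<forall>g\<in>C. \<forall>g'\<in>C. g \<subseteq> g' \<or> g' \<subseteq> g"
  shows "goodg x0 (\<Union>C)"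
proof -
  have two: "\<exists>g\<in>C. p \<in> g \<and> q \<in> g" if pq: "p \<in> \<Union>C" "q \<in> \<Union>C" for p q
  proof -
    obtain g1 g2 where "g1 \<in> C" "g2 \<in> C" "p \<in> g1" "q \<in> g2" using pq by blast
    then show ?thesis using assms(3) by blast
  qed
  have G: "goodg x0 g" if "g \<in> C" for g using assms(2) that by blast
  show ?thesis unfolding goodg_def
  proof (intro conjI allI impI)
    fix x y y' assume "(x,y) \<in> \<Union>C" "(x,y') \<in> \<Union>C"
    then obtain g where "g\<in>C" "(x,y)\<in>g" "(x,y')\<in>g" using two by blast
    then show "y = y'" using goodgD(1)[OF G] by blast
  next
    fix x y x' y' assume "(x,y) \<in> \<Union>C" "(x',y') \<in> \<Union>C"
    then obtain g where "g\<in>C" "(x,y)\<in>g" "(x',y')\<in>g" using two by blast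
    then show "(x+x', y+y') \<in> \<Union>C" using goodgD(2)[OF G] by blast
  next
    fix x y c assume "(x,y) \<in> \<Union>C"
    then obtain g where "g\<in>C" "(x,y)\<in>g" by blast
    then show "(c *\<^sub>R x, c*y) \<in> \<Union>C" using goodgD(3)[OF G] by blast
  next
    fix x y assume "(x,y) \<in> \<Union>C"
    then obtain g where "g\<in>C" "(x,y)\<in>g" by blast
    then show "y \<le> norm x" using goodgD(4)[OF G] by blast
  next
    obtain g where "g \<in> C" using assms(1) by blast
    then show "(x0, norm x0) \<in> \<Union>C" using goodgD(5)[OF G] by blast
  qed
qed

lemma goodg_extend:
  assumes g: "goodg x0 g" and v: "\<forall>y. (v,y) \<notin> g"
  shows "\<exists>g'. goodg x0 g' \<and> g \<subseteq> g' \<and> g' \<noteq> g"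
proof -
  have fn1: "\<And>x y y'. (x,y)\<in>g \<Longrightarrow> (x,y')\<in>g \<Longrightarrow> y = y'"
   and add: "\<And>x y x' y'. (x,y)\<in>g \<Longrightarrow> (x',y')\<in>g \<Longrightarrow> (x+x', y+y')\<in>g"
   and sc: "\<And>x y c. (x,y)\<in>g \<Longrightarrow> (c *\<^sub>R x, c*y) \<in> g"
   and bd: "\<And>x y. (x,y)\<in>g \<Longrightarrow> y \<le> norm x"
   and x0: "(x0, norm x0) \<in> g" using goodgD[OF g] by blast+
  have zero: "(0,0) \<in> g" using sc[OF x0, of 0] by simp
  define S where "S = {yb - norm (b - v) | b yb. (b,yb) \<in> g}"
  have key: "yb - norm (b - v) \<le> norm (a + v) - ya" if "(a,ya)\<in>g" "(b,yb)\<in>g" for a ya b yb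
  proof -
    have "ya + yb \<le> norm (a + b)" using bd[OF add[OF that]] .
    also have "norm (a + b) \<le> norm (a + v) + norm (b - v)"
      using norm_triangle_ineq[of "a+v" "b - v"] by simp
    finally show ?thesis by simp
  qed
  have Sne: "S \<noteq> {}" using zero unfolding S_def by blast
  have Sbdd: "bdd_above S" unfolding S_def bdd_above_def using key[OF zero] by blast
  define c where "c = Sup S"
  have c1: "yb - norm (b - v) \<le> c" if "(b,yb)\<in>g" for b yb
    unfolding c_def by (rule cSup_upper[OF _ Sbdd]) (use that S_def in blast)
  have c2: "c \<le> norm (a + v) - ya" if "(a,ya)\<in>g" for a ya
    unfolding c_def by (rule cSup_least[OF Sne]) (use key[OF that] S_def in blast)
  define g' where "g' = {(x + t *\<^sub>R v, y + t * c) | x y t. (x,y) \<in> g}"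
  have vnot: "v \<noteq> x" if "(x,y) \<in> g" for x y using v that by blast
  have "goodg x0 g'" unfolding goodg_def
  proof (intro conjI allI impI)
    fix x y y' assume "(x,y) \<in> g'" "(x,y') \<in> g'"
    then obtain a ya t b yb s where A: "(a,ya)\<in>g" "x = a + t *\<^sub>R v" "y = ya + t*c"
      and B: "(b,yb)\<in>g" "x = b + s *\<^sub>R v" "y' = yb + s*c" unfolding g'_def by blast
    have ts: "t = s"
    proof (rule ccontr)
      assume "t \<noteq> s"
      have "(b - a) = (t - s) *\<^sub>R v" using A B by (simp add: algebra_simps)
      have "(b + (-1) *\<^sub>R a, yb + (-1)*ya) \<in> g" using add[OF B(1) sc[OF A(1)]] .
      then have "(b - a, yb - ya) \<in> g" by simp
      then have "((1/(t-s)) *\<^sub>R (b - a), (1/(t-s)) * (yb - ya)) \<in> g"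
        by (rule sc)
      moreover have "(1/(t-s)) *\<^sub>R (b - a) = v" using \<open>b - a = _\<close> \<open>t \<noteq> s\<close> by simp
      ultimately show False using v by metis
    qed
    then have "a = b" using A B by simp
    then have "ya = yb" using fn1 A B by blast
    then show "y = y'" using A B ts by simp
  next
    fix x y x' y' assume "(x,y) \<in> g'" "(x',y') \<in> g'"
    then obtain a ya t b yb s where A: "(a,ya)\<in>g" "x = a + t *\<^sub>R v" "y = ya + t*c"
      and B: "(b,yb)\<in>g" "x' = b + s *\<^sub>R v" "y' = yb + s*c" unfolding g'_def by blast
    have "(a+b, ya+yb) \<in> g" using add A B by blast
    moreover have "x + x' = (a+b) + (t+s) *\<^sub>R v" "y + y' = (ya+yb) + (t+s)*c"
      using A B by (simp_all add: algebra_simps)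
    ultimately show "(x + x', y + y') \<in> g'" unfolding g'_def by blast
  next
    fix x y r assume "(x,y) \<in> g'"
    then obtain a ya t where A: "(a,ya)\<in>g" "x = a + t *\<^sub>R v" "y = ya + t*c"
      unfolding g'_def by blast
    have "(r *\<^sub>R a, r*ya) \<in> g" using sc A by blast
    moreover have "r *\<^sub>R x = r *\<^sub>R a + (r*t) *\<^sub>R v" "r * y = r*ya + (r*t)*c"
      using A by (simp_all add: algebra_simps)
    ultimately show "(r *\<^sub>R x, r*y) \<in> g'" unfolding g'_def by blast
  next
    fix x y assume "(x,y) \<in> g'"
    then obtain a ya t where A: "(a,ya)\<in>g" "x = a + t *\<^sub>R v" "y = ya + t*c"
      unfolding g'_def by blast
    consider "t = 0" | "t > 0" | "t < 0" by linarith
    then show "y \<le> norm x"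
    proof cases
      case 1 then show ?thesis using A bd by simp
    next
      case 2
      have "((1/t) *\<^sub>R a, (1/t)*ya) \<in> g" using sc A by blast
      from c2[OF this] have "c \<le> norm ((1/t) *\<^sub>R a + v) - (1/t)*ya" .
      then have "t * c \<le> t * (norm ((1/t) *\<^sub>R a + v) - (1/t)*ya)" using 2 by simp
      also have "\<dots> = norm (t *\<^sub>R ((1/t) *\<^sub>R a + v)) - ya" using 2
        by (simp add: right_diff_distrib)
      also have "t *\<^sub>R ((1/t) *\<^sub>R a + v) = x" using 2 A by (simp add: algebra_simps)
      finally show ?thesis using A by simp
    next
      case 3
      have "((-1/t) *\<^sub>R a, (-1/t)*ya) \<in> g" using sc A by blast
      from c1[OF this] have "(-1/t)*ya - norm ((-1/t) *\<^sub>R a - v) \<le> c" .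
      then have "(-t) * ((-1/t)*ya - norm ((-1/t) *\<^sub>R a - v)) \<le> (-t) * c"
        using 3 by (intro mult_left_mono) auto
      also have "(-t) * ((-1/t)*ya - norm ((-1/t) *\<^sub>R a - v)) = ya - norm ((-t) *\<^sub>R ((-1/t) *\<^sub>R a - v))"
      proof -
        have e1: "norm ((-t) *\<^sub>R ((-1/t) *\<^sub>R a - v)) = (-t) * norm ((-1/t) *\<^sub>R a - v)"
          using 3 by simp
        have e2: "(-t)*((-1/t)*ya) = ya" using 3 by (simp add: field_simps)
        show ?thesis unfolding e1 right_diff_distrib e2 ..
      qed
      also have "(-t) *\<^sub>R ((-1/t) *\<^sub>R a - v) = x" using 3 A by (simp add: algebra_simps)
      finally show ?thesis using A by simp
    qed
  next
    have "x0 = x0 + 0 *\<^sub>R v \<and> norm x0 = norm x0 + 0 * c" by simp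
    then show "(x0, norm x0) \<in> g'" unfolding g'_def using x0 by blast
  qed
  moreover have "g \<subseteq> g'"
  proof
    fix p assume p: "p \<in> g"
    obtain a b where ab: "p = (a,b)" by (cases p)
    have "(a,b) = (a + 0 *\<^sub>R v, b + 0 * c)" by simp
    then show "p \<in> g'" unfolding g'_def using p ab by blast
  qed
  moreover have "(v, c) = (0 + 1 *\<^sub>R v, 0 + 1 * c)" by simp
  then have "(v, c) \<in> g'" unfolding g'_def using zero by blast
  then have "g' \<noteq> g" using v by blast
  ultimately show ?thesis by blast
qed

lemma hahn_banach_norming:
  fixes x0 :: "'a::real_normed_vector"
  shows "\<exists>f. linear f \<and> (\<forall>x. \<bar>f x\<bar> \<le> norm x) \<and> f x0 = norm x0"
proof -
  define A where "A = {g. goodg x0 g}"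
  have "\<exists>M\<in>A. \<forall>X\<in>A. M \<subseteq> X \<longrightarrow> X = M"
  proof (rule Zorn_Lemma2, intro ballI)
    fix C assume C: "C \<in> chains A"
    show "\<exists>U\<in>A. \<forall>X\<in>C. X \<subseteq> U"
    proof (cases "C = {}")
      case True then show ?thesis using goodg_g0 A_def by blast
    next
      case False
      have "goodg x0 (\<Union>C)" apply (rule goodg_union[OF False])
        using C unfolding chains_def chain_subset_def A_def by blast+
      then show ?thesis unfolding A_def by blast
    qed
  qed
  then obtain M where M: "goodg x0 M" and max: "\<And>X. goodg x0 X \<Longrightarrow> M \<subseteq> X \<Longrightarrow> X = M"
    unfolding A_def by blast
  have fn1: "\<And>x y y'. (x,y)\<in>M \<Longrightarrow> (x,y')\<in>M \<Longrightarrow> y = y'"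
   and add: "\<And>x y x' y'. (x,y)\<in>M \<Longrightarrow> (x',y')\<in>M \<Longrightarrow> (x+x', y+y')\<in>M"
   and sc: "\<And>x y c. (x,y)\<in>M \<Longrightarrow> (c *\<^sub>R x, c*y) \<in> M"
   and bd: "\<And>x y. (x,y)\<in>M \<Longrightarrow> y \<le> norm x"
   and x0: "(x0, norm x0) \<in> M" using goodgD[OF M] by blast+
  have tot: "\<exists>y. (x,y) \<in> M" for x
    using goodg_extend[OF M, of x] max by blast
  define f where "f x = (THE y. (x,y) \<in> M)" for x
  have fM: "(x, f x) \<in> M" for x
    unfolding f_def by (rule theI') (use tot fn1 in blast)
  have fe: "f x = y" if "(x,y) \<in> M" for x y using fn1[OF fM that] .
  have lin: "linear f"
  proof (rule linearI)
    show "f (x + y) = f x + f y" for x y by (rule fe, rule add[OF fM fM])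
    show "f (c *\<^sub>R x) = c *\<^sub>R f x" for c x using fe[OF sc[OF fM]] by simp
  qed
  have "\<bar>f x\<bar> \<le> norm x" for x
  proof -
    have "f x \<le> norm x" using bd[OF fM] .
    moreover have "f (-x) = - f x" using linear_neg[OF lin] .
    then have "- f x \<le> norm x" using bd[OF fM, of "-x"] by simp
    ultimately show ?thesis by linarith
  qed
  moreover have "f x0 = norm x0" using fe[OF x0] .
  ultimately show ?thesis using lin by blast
qed



definition infdim :: "'a::real_vector set \<Rightarrow> bool" where
  "infdim V \<longleftrightarrow> (\<forall>B. finite B \<longrightarrow> \<not> V \<subseteq> span B)"

lemma infdim_nonzero: "infdim V \<Longrightarrow> \<exists>u\<in>V. u \<noteq> 0"
  unfolding infdim_def by (metis empty_iff finite.emptyI span_empty subsetI insert_iff)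

lemma infdim_ker:
  fixes g :: "'a::real_vector \<Rightarrow> real"
  assumes V: "subspace V" "infdim V" and g: "linear g"
  shows "subspace (V \<inter> {x. g x = 0}) \<and> infdim (V \<inter> {x. g x = 0})"
proof
  have "subspace {x. g x = 0}" unfolding subspace_def
    using g by (simp add: linear_add linear_scale linear_0)
  then show "subspace (V \<inter> {x. g x = 0})" using subspace_inter[OF V(1)] by blast
  show "infdim (V \<inter> {x. g x = 0})" unfolding infdim_def
  proof (intro allI impI notI)
    fix B assume B: "finite B" "V \<inter> {x. g x = 0} \<subseteq> span B"
    show False
    proof (cases "V \<subseteq> {x. g x = 0}")
      case True then show False using B V(2) unfolding infdim_def by blast
    next
      case False
      then obtain w where w: "w \<in> V" "g w \<noteq> 0" by blast
      have "V \<subseteq> span (insert w B)"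
      proof
        fix x assume x: "x \<in> V"
        define c where "c = g x / g w"
        have "x - c *\<^sub>R w \<in> V" using V(1) x w by (simp add: subspace_diff subspace_scale)
        moreover have "g (x - c *\<^sub>R w) = 0" using w g unfolding c_def
          by (simp add: linear_diff linear_scale)
        ultimately have "x - c *\<^sub>R w \<in> span (insert w B)" using B span_mono[of B "insert w B"] by blast
        moreover have "c *\<^sub>R w \<in> span (insert w B)" by (simp add: span_base span_mul)
        ultimately have "(x - c *\<^sub>R w) + c *\<^sub>R w \<in> span (insert w B)" by (rule span_add)
        then show "x \<in> span (insert w B)" by simp
      qed
      then show False using V(2) B(1) unfolding infdim_def by blast
    qed
  qed
qed

lemma infdim_kern:
  fixes f :: "nat \<Rightarrow> 'a::real_vector \<Rightarrow> real" and N :: nat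
  assumes V: "subspace V" "infdim V" and f: "\<And>k. linear (f k)"
  shows "subspace (V \<inter> {x. \<forall>k<N. f k x = 0}) \<and> infdim (V \<inter> {x. \<forall>k<N. f k x = 0})"
proof (induction N)
  case 0 then show ?case using V by simp
next
  case (Suc N)
  have eq: "V \<inter> {x. \<forall>k<Suc N. f k x = 0} = (V \<inter> {x. \<forall>k<N. f k x = 0}) \<inter> {x. f N x = 0}"
    using less_Suc_eq by auto
  show ?case unfolding eq using infdim_ker[OF conjunct1[OF Suc] conjunct2[OF Suc] f] .
qed

definition nxt :: "'a::real_vector set \<Rightarrow> 'a" where "nxt S = (SOME v. v \<notin> span S)"
definition Tseq :: "nat \<Rightarrow> 'a::real_vector set" where
  "Tseq n = ((\<lambda>S. insert (nxt S) S) ^^ n) {}"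

lemma Tseq_0: "Tseq 0 = {}" by (simp add: Tseq_def)
lemma Tseq_Suc: "Tseq (Suc n) = insert (nxt (Tseq n)) (Tseq n)" by (simp add: Tseq_def)

lemma Tseq_mono: "m \<le> n \<Longrightarrow> Tseq m \<subseteq> Tseq n"
proof (induction n)
  case 0 then show ?case by simp
next
  case (Suc n) then show ?case using Tseq_Suc[of n] le_Suc_eq by auto
qed

lemma Tseq_props:
  assumes H: "\<And>B::'a::real_vector set. finite B \<Longrightarrow> \<exists>v. v \<notin> span B"
  shows "finite (Tseq n :: 'a set) \<and> independent (Tseq n :: 'a set) \<and> card (Tseq n :: 'a set) = n"
proof (induction n)
  case 0 then show ?case by (simp add: Tseq_0 independent_empty)
next
  case (Suc n)
  have nx: "nxt (Tseq n :: 'a set) \<notin> span (Tseq n)"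
    unfolding nxt_def by (rule someI_ex, rule H) (use Suc in blast)
  then have "nxt (Tseq n :: 'a set) \<notin> Tseq n" using span_base by blast
  then show ?case using Suc nx independent_insertI unfolding Tseq_Suc by auto
qed

lemma infdim_span_T:
  assumes H: "\<And>B::'a::real_vector set. finite B \<Longrightarrow> \<exists>v. v \<notin> span B"
  shows "infdim (span (\<Union>n. Tseq n :: 'a set))"
  unfolding infdim_def
proof (intro allI impI notI)
  fix B :: "'a set" assume B: "finite B" "span (\<Union>n. Tseq n) \<subseteq> span B"
  let ?S = "Tseq (Suc (card B)) :: 'a set"
  have "?S \<subseteq> span B" using B(2) span_superset by blast
  then have "card ?S \<le> card B" using independent_span_bound[OF B(1)] Tseq_props[OF H] by blast
  then show False using Tseq_props[OF H, of "Suc (card B)"] by simp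
qed

lemma span_T_union: "span (\<Union>n. Tseq n :: 'a::real_vector set) \<subseteq> (\<Union>n. span (Tseq n))"
proof
  fix x :: 'a assume x: "x \<in> span (\<Union>n. Tseq n)"
  have sub: "subspace (\<Union>n. span (Tseq n :: 'a set))" unfolding subspace_def
  proof (intro conjI ballI allI)
    show "0 \<in> (\<Union>n. span (Tseq n :: 'a set))" using span_zero by blast
  next
    fix a b assume "a \<in> (\<Union>n. span (Tseq n :: 'a set))" "b \<in> (\<Union>n. span (Tseq n :: 'a set))"
    then obtain m n where mn: "a \<in> span (Tseq m)" "b \<in> span (Tseq n)" by blast
    have "a \<in> span (Tseq (max m n))" "b \<in> span (Tseq (max m n))"
      using mn span_mono[OF Tseq_mono[of m "max m n"]] span_mono[OF Tseq_mono[of n "max m n"]] by auto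
    then have "a + b \<in> span (Tseq (max m n))" by (rule span_add)
    then show "a + b \<in> (\<Union>n. span (Tseq n :: 'a set))" by blast
  next
    fix c and a assume "a \<in> (\<Union>n. span (Tseq n :: 'a set))"
    then obtain m where "a \<in> span (Tseq m)" by blast
    then have "c *\<^sub>R a \<in> span (Tseq m)" by (rule span_mul)
    then show "c *\<^sub>R a \<in> (\<Union>n. span (Tseq n :: 'a set))" by blast
  qed
  show "x \<in> (\<Union>n. span (Tseq n))"
    using x sub by (rule span_subspace_induct) (use span_base in blast)
qed

lemma rat_seq: "\<exists>r::nat \<Rightarrow> rat. (\<lambda>k. of_rat (r k)) \<longlonglongrightarrow> (a::real)"
proof -
  have "\<forall>k. \<exists>r. a < of_rat r \<and> of_rat r < a + 1 / real (Suc k)"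
  proof
    fix k
    obtain q where q: "q \<in> \<rat>" "a < q" "q < a + 1 / real (Suc k)"
      using Rats_dense_in_real[of a "a + 1 / real (Suc k)"] by auto
    then obtain r where "q = of_rat r" by (auto elim: Rats_cases)
    then show "\<exists>r. a < of_rat r \<and> of_rat r < a + 1 / real (Suc k)" using q by blast
  qed
  then obtain r where r: "\<And>k. a < of_rat (r k) \<and> of_rat (r k) < a + 1 / real (Suc k)" by metis
  have "(\<lambda>k. of_rat (r k) - a) \<longlonglongrightarrow> 0"
  proof (rule LIMSEQ_norm_0)
    fix k
    have "a < of_rat (r k)" "of_rat (r k) < a + 1 / real (Suc k)" using r[of k] by auto
    then show "norm (of_rat (r k) - a) < 1 / real (Suc k)" by simp
  qed
  then have "(\<lambda>k. (of_rat (r k) - a) + a) \<longlonglongrightarrow> 0 + a" by (intro tendsto_add tendsto_const)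
  then show ?thesis by auto
qed

definition Dset :: "'a::real_vector set" where
  "Dset = (\<Union>n. (\<lambda>q. \<Sum>v\<in>Tseq n. of_rat (q v) *\<^sub>R v) ` (PiE (Tseq n) (\<lambda>_. UNIV)))"

lemma countable_Dset:
  assumes H: "\<And>B::'a::real_vector set. finite B \<Longrightarrow> \<exists>v. v \<notin> span B"
  shows "countable (Dset :: 'a set)"
  unfolding Dset_def
proof (rule countable_UN)
  show "countable (UNIV :: nat set)" by simp
next
  fix n :: nat
  have "finite (Tseq n :: 'a set)" using Tseq_props[OF H] by blast
  then have "countable (PiE (Tseq n :: 'a set) (\<lambda>_. UNIV :: rat set))"
    by (rule countable_PiE) simp
  then show "countable ((\<lambda>q. \<Sum>v\<in>Tseq n. of_rat (q v) *\<^sub>R v) ` (PiE (Tseq n :: 'a set) (\<lambda>_. UNIV)))"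
    by (rule countable_image)
qed

lemma zero_Dset: "(0::'a::real_vector) \<in> Dset"
proof -
  have "(\<lambda>q. \<Sum>v\<in>Tseq 0. of_rat (q v) *\<^sub>R v) (\<lambda>_. undefined) = (0::'a)" by (simp add: Tseq_0)
  moreover have "(\<lambda>_. undefined) \<in> PiE (Tseq 0 :: 'a set) (\<lambda>_. UNIV)" by (simp add: Tseq_0)
  ultimately have "(0::'a) \<in> (\<lambda>q. \<Sum>v\<in>Tseq 0. of_rat (q v) *\<^sub>R v) ` (PiE (Tseq 0) (\<lambda>_. UNIV))"
    by (rule image_eqI[OF sym])
  then show ?thesis unfolding Dset_def by (rule UN_I[OF UNIV_I])
qed

lemma span_T_closure_D:
  assumes H: "\<And>B::'a::real_normed_vector set. finite B \<Longrightarrow> \<exists>v. v \<notin> span B"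
  shows "span (\<Union>n. Tseq n :: 'a set) \<subseteq> closure Dset"
proof
  fix x :: 'a assume "x \<in> span (\<Union>n. Tseq n)"
  then obtain n where "x \<in> span (Tseq n)" using span_T_union by blast
  moreover have fin: "finite (Tseq n :: 'a set)" using Tseq_props[OF H] by blast
  ultimately obtain u where x: "x = (\<Sum>v\<in>Tseq n. u v *\<^sub>R v)" using span_finite by blast
  obtain R where R: "\<And>a. (\<lambda>k. of_rat (R a k)) \<longlonglongrightarrow> (a::real)" using rat_seq by metis
  define s where "s k = (\<Sum>v\<in>Tseq n. of_rat (R (u v) k) *\<^sub>R v)" for k
  have "s k \<in> Dset" for k
  proof -
    have "s k = (\<lambda>q. \<Sum>v\<in>Tseq n. of_rat (q v) *\<^sub>R v) (restrict (\<lambda>v. R (u v) k) (Tseq n))"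
      unfolding s_def by (intro sum.cong) auto
    moreover have "restrict (\<lambda>v. R (u v) k) (Tseq n) \<in> PiE (Tseq n) (\<lambda>_. UNIV)" by simp
    ultimately have "s k \<in> (\<lambda>q. \<Sum>v\<in>Tseq n. of_rat (q v) *\<^sub>R v) ` (PiE (Tseq n) (\<lambda>_. UNIV))"
      by (rule image_eqI)
    then show ?thesis unfolding Dset_def by (rule UN_I[OF UNIV_I])
  qed
  moreover have "s \<longlonglongrightarrow> x" unfolding s_def x
    by (intro tendsto_sum tendsto_scaleR R tendsto_const)
  ultimately show "x \<in> closure Dset" unfolding closure_sequential by blast
qed



definition pf :: "(nat \<Rightarrow> 'a::real_normed_vector \<Rightarrow> real) \<Rightarrow> nat \<Rightarrow> 'a \<Rightarrow> real" where
  "pf f N x = norm x + (\<Sum>k<N. (1/2)^Suc k * \<bar>f k x\<bar>)"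

lemma pf_hom:
  assumes f: "\<And>k. linear (f k)" and c: "c \<ge> 0"
  shows "pf f M (c *\<^sub>R x) = c * pf f M x"
proof -
  have "\<bar>f k (c *\<^sub>R x)\<bar> = c * \<bar>f k x\<bar>" for k
    using linear_scale[OF f[of k], of c x] c by (simp add: abs_mult)
  then show ?thesis unfolding pf_def using c
    by (simp add: sum_distrib_left distrib_left mult.left_commute)
qed

lemma pf_conv:
  assumes f: "\<And>k. linear (f k)" and uv: "u \<ge> 0" "v \<ge> 0"
  shows "pf f N (u *\<^sub>R x + v *\<^sub>R y) \<le> u * pf f N x + v * pf f N y"
proof -
  have n: "norm (u *\<^sub>R x + v *\<^sub>R y) \<le> u * norm x + v * norm y"
    using norm_triangle_ineq[of "u *\<^sub>R x" "v *\<^sub>R y"] uv by simp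
  have a: "(1/2)^Suc k * \<bar>f k (u *\<^sub>R x + v *\<^sub>R y)\<bar> \<le> u * ((1/2)^Suc k * \<bar>f k x\<bar>) + v * ((1/2)^Suc k * \<bar>f k y\<bar>)" for k
  proof -
    have "f k (u *\<^sub>R x + v *\<^sub>R y) = u * f k x + v * f k y"
      using f[of k] by (simp add: linear_add linear_scale)
    then have "\<bar>f k (u *\<^sub>R x + v *\<^sub>R y)\<bar> \<le> u * \<bar>f k x\<bar> + v * \<bar>f k y\<bar>"
      using uv abs_triangle_ineq[of "u * f k x" "v * f k y"] by (simp add: abs_mult)
    then have "(1/2)^Suc k * \<bar>f k (u *\<^sub>R x + v *\<^sub>R y)\<bar> \<le> (1/2)^Suc k * (u * \<bar>f k x\<bar> + v * \<bar>f k y\<bar>)"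
      by (intro mult_left_mono) auto
    then show ?thesis by (simp add: algebra_simps)
  qed
  have "(\<Sum>k<N. (1/2)^Suc k * \<bar>f k (u *\<^sub>R x + v *\<^sub>R y)\<bar>) \<le>
        (\<Sum>k<N. u * ((1/2)^Suc k * \<bar>f k x\<bar>) + v * ((1/2)^Suc k * \<bar>f k y\<bar>))"
    by (intro sum_mono a)
  also have "\<dots> = u * (\<Sum>k<N. (1/2)^Suc k * \<bar>f k x\<bar>) + v * (\<Sum>k<N. (1/2)^Suc k * \<bar>f k y\<bar>)"
    by (simp add: sum.distrib sum_distrib_left)
  finally show ?thesis using n unfolding pf_def by (simp add: algebra_simps)
qed

lemma geo_tail: "(\<Sum>k<M. (if k < N then 0 else (1/2::real)^Suc k)) = (if M \<le> N then 0 else (1/2)^N - (1/2)^M)"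
proof (induction M)
  case 0 then show ?case by simp
next
  case (Suc M)
  show ?case
  proof (cases "Suc M \<le> N")
    case True then show ?thesis using Suc by simp
  next
    case False
    show ?thesis
    proof (cases "M = N")
      case True then show ?thesis using Suc by simp
    next
      case False
      then have "N < M" using \<open>\<not> Suc M \<le> N\<close> by simp
      then show ?thesis using Suc by simp
    qed
  qed
qed

lemma pf_small:
  assumes f: "\<And>k x. \<bar>f k x\<bar> \<le> norm x" and w: "norm w = 1" "\<And>k. k < N \<Longrightarrow> f k w = 0"
  shows "pf f M w \<le> 1 + (1/2)^N"
proof -
  have "(\<Sum>k<M. (1/2)^Suc k * \<bar>f k w\<bar>) \<le> (\<Sum>k<M. (if k < N then 0 else (1/2::real)^Suc k))"
  proof (intro sum_mono)
    fix k
    show "(1/2)^Suc k * \<bar>f k w\<bar> \<le> (if k < N then 0 else (1/2::real)^Suc k)"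
    proof (cases "k < N")
      case True then show ?thesis using w by simp
    next
      case False
      have "(1/2::real)^Suc k * \<bar>f k w\<bar> \<le> (1/2)^Suc k * 1"
        using f[of k w] w by (intro mult_left_mono) auto
      then show ?thesis using False by simp
    qed
  qed
  also have "\<dots> \<le> (1/2)^N" unfolding geo_tail by simp
  finally show ?thesis unfolding pf_def using w by simp
qed

theorem corollary8:
  fixes X_witness :: "'a::banach itself"
  assumes "\<not> (\<exists>B::'a set. finite B \<and> span B = UNIV)"
  shows "\<exists>K::'a set. closed K \<and> convex K \<and> K \<noteq> {} \<and> K \<subseteq> ball 0 1 \<and>
           (SUP x\<in>K. norm x) = 1"
proof -
  have H: "\<And>B::'a set. finite B \<Longrightarrow> \<exists>v. v \<notin> span B" using assms by blast
  define E where "E = (\<Union>n. Tseq n :: 'a set)"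
  define Z where "Z = closure (span E)"
  have infE: "infdim (span E)" using infdim_span_T[OF H] unfolding E_def .
  have ZD: "Z \<subseteq> closure Dset" unfolding Z_def
    by (rule closure_minimal) (use span_T_closure_D[OF H] E_def in auto)
  have cD: "countable (Dset :: 'a set)" using countable_Dset[OF H] .
  have Dne: "(Dset :: 'a set) \<noteq> {}" using zero_Dset by blast
  define z where "z k = from_nat_into (Dset::'a set) k" for k
  have "\<forall>k. \<exists>g. linear g \<and> (\<forall>x. \<bar>g x\<bar> \<le> norm x) \<and> g (z k) = norm (z k)"
    using hahn_banach_norming by blast
  then obtain f where fall: "\<forall>k. linear (f k) \<and> (\<forall>x. \<bar>f k x\<bar> \<le> norm x) \<and> f k (z k) = norm (z k)"
    by metis
  have flin: "\<And>k. linear (f k)" and fbd: "\<And>k x. \<bar>f k x\<bar> \<le> norm x"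
    and fz: "\<And>k. f k (z k) = norm (z k)" using fall by blast+
  have fcont: "continuous_on UNIV (f k)" for k
  proof -
    have "bounded_linear (f k)"
      by (rule bounded_linear_intro[where K=1])
         (use flin[of k] fbd[of k] in \<open>auto simp: linear_add linear_scale\<close>)
    then show ?thesis by (rule linear_continuous_on)
  qed
  have pos: "\<exists>k. f k x \<noteq> 0" if x: "x \<in> Z" "x \<noteq> 0" for x
  proof -
    have "x \<in> closure Dset" using x ZD by blast
    moreover have "norm x / 3 > 0" using x by simp
    ultimately obtain y where y: "y \<in> Dset" "dist y x < norm x / 3"
      using closure_approachable by blast
    obtain k where k: "z k = y" using from_nat_into_surj[OF cD y(1)] z_def by blast
    have "f k x = f k y - f k (y - x)" using linear_diff[OF flin[of k]] by simp
    moreover have "f k y = norm y" using fz[of k] unfolding k .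
    moreover have "\<bar>f k (y - x)\<bar> \<le> dist y x" using fbd[of k "y - x"] by (simp add: dist_norm)
    moreover have "norm y \<ge> norm x - dist y x"
      using norm_triangle_ineq2[of x y] by (simp add: dist_norm norm_minus_commute)
    ultimately have "f k x > 0" using y(2) by linarith
    then have "f k x \<noteq> 0" by simp
    then show ?thesis by blast
  qed
  define K where "K = Z \<inter> {x. \<forall>N. pf f N x \<le> 1}"
  have closedK: "closed K"
  proof -
    have "closed {x. \<forall>N. pf f N x \<le> 1}"
    proof (rule closed_Collect_all)
      fix N
      have "continuous_on UNIV (pf f N)" unfolding pf_def
        by (intro continuous_intros fcont)
      then show "closed {x. pf f N x \<le> 1}" by (intro closed_Collect_le continuous_intros)
    qed
    then show ?thesis unfolding K_def Z_def by (intro closed_Int) auto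
  qed
  have convexK: "convex K"
  proof -
    have "convex Z" unfolding Z_def by (intro convex_closure subspace_imp_convex subspace_span)
    moreover have "convex {x. \<forall>N. pf f N x \<le> 1}" unfolding convex_def
    proof (intro ballI allI impI, clarify)
      fix x y :: 'a and u v :: real and N
      assume xy: "\<forall>N. pf f N x \<le> 1" "\<forall>N. pf f N y \<le> 1" and uv: "0 \<le> u" "0 \<le> v" "u + v = 1"
      have "pf f N (u *\<^sub>R x + v *\<^sub>R y) \<le> u * pf f N x + v * pf f N y"
        by (rule pf_conv[OF flin uv(1,2)])
      also have "\<dots> \<le> u * 1 + v * 1"
        using xy uv by (intro add_mono mult_left_mono) auto
      finally show "pf f N (u *\<^sub>R x + v *\<^sub>R y) \<le> 1" using uv by simp
    qed
    ultimately show ?thesis unfolding K_def by (rule convex_Int)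
  qed
  have inZ: "x \<in> Z" if "x \<in> span E" for x using that closure_subset unfolding Z_def by blast
  have zeroK: "0 \<in> K"
  proof -
    have "pf f N 0 = 0" for N unfolding pf_def using linear_0[OF flin] by simp
    then show ?thesis unfolding K_def using inZ[OF span_zero] by simp
  qed
  have ballK: "K \<subseteq> ball 0 1"
  proof
    fix x assume xK: "x \<in> K"
    show "x \<in> ball 0 1"
    proof (rule ccontr)
      assume "x \<notin> ball 0 1"
      then have n1: "norm x \<ge> 1" by simp
      then have "x \<noteq> 0" by auto
      then obtain k where k: "f k x \<noteq> 0" using pos xK unfolding K_def by blast
      have "(1/2)^Suc k * \<bar>f k x\<bar> \<le> (\<Sum>j<Suc k. (1/2)^Suc j * \<bar>f j x\<bar>)"
        by (rule member_le_sum[where f="\<lambda>j. (1/2)^Suc j * \<bar>f j x\<bar>"]) auto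
      moreover have "(1/2::real)^Suc k * \<bar>f k x\<bar> > 0" using k by simp
      ultimately have "pf f (Suc k) x > 1" unfolding pf_def using n1 by linarith
      moreover have "pf f (Suc k) x \<le> 1" using xK unfolding K_def by blast
      ultimately show False by linarith
    qed
  qed
  have near: "\<exists>x\<in>K. norm x \<ge> 1 - (1/2)^N" for N
  proof -
    have "subspace (span E \<inter> {x. \<forall>k<N. f k x = 0}) \<and> infdim (span E \<inter> {x. \<forall>k<N. f k x = 0})"
      by (rule infdim_kern[OF subspace_span infE flin])
    then obtain u where u: "u \<in> span E" "u \<noteq> 0" "\<And>k. k < N \<Longrightarrow> f k u = 0"
      using infdim_nonzero by blast
    define w where "w = (1 / norm u) *\<^sub>R u"
    have wE: "w \<in> span E" unfolding w_def using u(1) by (rule span_mul)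
    have wn: "norm w = 1" unfolding w_def using u(2) by simp
    have w0: "f k w = 0" if "k < N" for k
      unfolding w_def using linear_scale[OF flin[of k]] u(3)[OF that] by simp
    define d :: real where "d = (1/2)^N"
    have d0: "d \<ge> 0" "d \<le> 1" unfolding d_def by (simp_all add: power_le_one)
    define x where "x = (1 / (1 + d)) *\<^sub>R w"
    have "x \<in> span E" unfolding x_def using wE by (rule span_mul)
    then have xZ: "x \<in> Z" by (rule inZ)
    have "pf f M x \<le> 1" for M
    proof -
      have "pf f M x = (1 / (1 + d)) * pf f M w" unfolding x_def
        by (rule pf_hom[OF flin]) (use d0 in simp)
      also have "\<dots> \<le> (1 / (1 + d)) * (1 + d)"
        using pf_small[OF fbd wn w0] d0 unfolding d_def by (intro mult_left_mono) auto
      also have "\<dots> = 1" using d0 by simp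
      finally show ?thesis .
    qed
    then have xK: "x \<in> K" unfolding K_def using xZ by blast
    have "norm x = 1 / (1 + d)" unfolding x_def using wn d0 by simp
    moreover have "1 - d \<le> 1 / (1 + d)"
    proof -
      have "(1 - d) * (1 + d) \<le> 1" by (simp add: algebra_simps)
      then show ?thesis using d0 by (simp add: field_simps)
    qed
    ultimately have "1 - (1/2)^N \<le> norm x" unfolding d_def by linarith
    then show ?thesis using xK by blast
  qed
  have bdd: "bdd_above (norm ` K)" using ballK by (auto intro!: bdd_aboveI[where M=1])
  have sup: "(SUP x\<in>K. norm x) = 1"
  proof (rule antisym)
    show "(SUP x\<in>K. norm x) \<le> 1"
      by (rule cSUP_least) (use zeroK ballK in auto)
    show "1 \<le> (SUP x\<in>K. norm x)"
    proof (rule ccontr)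
      assume "\<not> 1 \<le> (SUP x\<in>K. norm x)"
      then have "1 - (SUP x\<in>K. norm x) > 0" by simp
      then obtain N where N: "(1/2::real)^N < 1 - (SUP x\<in>K. norm x)"
        using real_arch_pow_inv[of "1 - (SUP x\<in>K. norm x)" "1/2"] by auto
      obtain x where x: "x \<in> K" "norm x \<ge> 1 - (1/2)^N" using near by blast
      have "norm x \<le> (SUP x\<in>K. norm x)" by (rule cSUP_upper[OF x(1) bdd])
      then show False using x N by linarith
    qed
  qed
  show ?thesis using closedK convexK zeroK ballK sup by blast
qed


end
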